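(* For every $N$, every $f<N$ and every $K\in\mathbb N$, there exists a deterministic solution to the $K$-round Marker Problem tolerating $f$ faults, with message complexity $O(N(f+1))$ per round, signature complexity $O(N(f+1)^2)$ per round, and $T=O(f+1)$ steps per round.
   Context: Model. There are $N$ processes $P_1,\dots,P_N$; $[N]=\{1,\dots,N\}$. Time proceeds in discrete steps $t=0,1,2,\dots$ (synchronous network). At each step every process first receives all messages sent to it at the previous step, each together with the identity of its sender, and then may send messages to any processes; the behaviour of an honest process is given by its protocol, a deterministic function of its inputs and of all messages it has received so far. Communication is authenticated: a process $P_j$ can sign a string $m$, producing $(m)_{P_j}$; every sent message is signed by its sender; no process other than $P_j$ can produce a string containing $(m)_{P_j}$ unless it copied it from a message it received, except that corrupted processes can produce signatures of any corrupted process. An $f$-adversary knows all protocols and all inputs (including future inputs), chooses at time $0$ a set of at most $f$ processes to corrupt, and makes them behave arbitrarily subject to the signature rule; the other processes are honest and follow their protocol. $\mathcal H$ denotes the set of honest processes. A protocol tolerates $f$ faults if its required properties hold against every $f$-adversary. Message complexity = number of messages sent by honest processes; signature complexity = number of signatures contained in messages sent by honest processes, counted with multiplicity (each nested signature and each repetition counts). Marker Problem ($K$ rounds of $T$ steps). Time is divided into $K$ consecutive rounds of $T$ steps. At the end of each round every honest process decides either "unmarked" or "marked, with previous marked process $d$" where $d\in[N]\cup\{\perp\}$. The marked process $M$ of round $1$ is $P_1$ if $P_1\in\mathcal H$ and $\perp$ otherwise; the marked process of round $i+1$ is the honest process that decided "marked" at the end of round $i$, or $\perp$ if there is none. At the beginning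 of round $i$, if $M\neq\perp$, $M$ receives an input $I_i\in[N]$ ("send the marker to $P_{I_i}$"). Required at the end of every round $i$: (consistency) at most one honest process decides it is marked; (liveness) if $M\in\mathcal H$, $I_i=n$ and $P_n\in\mathcal H$, then $P_n$ decides it is marked with previous marked process $M$; (non-impersonation) if $M=\perp$ and an honest process decides it is marked with previous marked process $d$, then $d\notin\mathcal H$. The message/signature complexity per round counts messages/signatures sent by honest processes during one round. *)

theory Defs
  imports Main
begin

text \<open>Processes are numbered 1..N. Message contents form a free term algebra:
  numbers, pairs, and signed strings.  MSig j m is the string m signed by P_j.\<close>

datatype msg = MNum nat | MPair msg msg | MSig nat msg

fun subterms :: "msg \<Rightarrow> msg set" where
  "subterms (MNum n) = {MNum n}"
| "subterms (MPair a b) = insert (MPair a b) (subterms a \<union> subterms b)"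
| "subterms (MSig j m) = insert (MSig j m) (subterms m)"

fun nsigs :: "msg \<Rightarrow> nat" where
  "nsigs (MNum n) = 0"
| "nsigs (MPair a b) = nsigs a + nsigs b"
| "nsigs (MSig j m) = Suc (nsigs m)"

text \<open>Decision at the end of a round: unmarked, or marked with the previous
  marked process (None = \<bottom>).\<close>
datatype decision = Unmarked | Marked "nat option"

text \<open>A trace: tr t i j = list of messages sent by P_i to P_j at step t.\<close>
type_synonym trace = "nat \<Rightarrow> nat \<Rightarrow> nat \<Rightarrow> msg list"

text \<open>Local view of a process: messages received (sending time, sender) and
  inputs received (round number).\<close>
type_synonym view = "(nat \<Rightarrow> nat \<Rightarrow> msg list) \<times> (nat \<Rightarrow> nat option)"

text \<open>A deterministic protocol: a sending function (process, step, view, receiver)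
  and a decision function (process, round, view).\<close>
type_synonym protocol =
  "(nat \<Rightarrow> nat \<Rightarrow> view \<Rightarrow> nat \<Rightarrow> msg list) \<times> (nat \<Rightarrow> nat \<Rightarrow> view \<Rightarrow> decision)"

text \<open>View of P_i consisting of all messages sent to it at steps before t
  (i.e. received up to step t) and all inputs of rounds up to ro.\<close>
definition view_of :: "nat \<Rightarrow> trace \<Rightarrow> (nat \<Rightarrow> nat \<Rightarrow> nat option) \<Rightarrow> nat \<Rightarrow> nat \<Rightarrow> nat \<Rightarrow> view" where
  "view_of N tr inp i t ro =
     ((\<lambda>s k. if s < t \<and> k \<in> {1..N} then tr s k i else []),
      (\<lambda>r. if r \<le> ro then inp r i else None))"

definition inputs :: "(nat \<Rightarrow> nat option) \<Rightarrow> (nat \<Rightarrow> nat) \<Rightarrow> nat \<Rightarrow> nat \<Rightarrow> nat option" where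
  "inputs mk I r i = (if mk r = Some i then Some (I r) else None)"

definition is_marked :: "decision \<Rightarrow> bool" where
  "is_marked d \<longleftrightarrow> d \<noteq> Unmarked"

text \<open>Decision of P_i at the end of round r (r \<ge> 1); round r consists of the
  steps (r-1)*T .. r*T-1, and the decision is based on everything received in it.\<close>
definition dec_of :: "nat \<Rightarrow> nat \<Rightarrow> protocol \<Rightarrow> (nat \<Rightarrow> nat) \<Rightarrow> trace \<Rightarrow> (nat \<Rightarrow> nat option)
                      \<Rightarrow> nat \<Rightarrow> nat \<Rightarrow> decision" where
  "dec_of N T P I tr mk i r = snd P i r (view_of N tr (inputs mk I) i (r * T) r)"

text \<open>Signature rule for corrupted processes: a signature of an honest process in a
  message sent at step t must have been copied from a message received by some
  corrupted process (i.e. sent to it at a step < t).\<close>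
definition adv_sig_ok :: "nat \<Rightarrow> nat set \<Rightarrow> trace \<Rightarrow> bool" where
  "adv_sig_ok N C tr \<longleftrightarrow>
    (\<forall>c\<in>C. \<forall>t j m j' x. m \<in> set (tr t c j) \<and> MSig j' x \<in> subterms m \<and> j' \<in> {1..N} - C \<longrightarrow>
       (\<exists>s<t. \<exists>k\<in>{1..N}. \<exists>c'\<in>C. \<exists>m'\<in>set (tr s k c'). MSig j' x \<in> subterms m'))"

text \<open>A (K rounds of T steps) execution of protocol P with corrupted set C, input
  sequence I, trace tr and marked-process function mk (mk r = marked process of round r).\<close>
definition execution :: "nat \<Rightarrow> nat \<Rightarrow> nat \<Rightarrow> protocol \<Rightarrow> nat set \<Rightarrow> (nat \<Rightarrow> nat)
                         \<Rightarrow> trace \<Rightarrow> (nat \<Rightarrow> nat option) \<Rightarrow> bool" where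
  "execution N K T P C I tr mk \<longleftrightarrow>
     (\<forall>i\<in>{1..N} - C. \<forall>t < K * T. \<forall>j.
        tr t i j = fst P i t (view_of N tr (inputs mk I) i t (t div T + 1)) j)
   \<and> mk 1 = (if 1 \<in> C then None else Some 1)
   \<and> (\<forall>r\<ge>1. mk (r + 1) =
        (if \<exists>!i. i \<in> {1..N} - C \<and> is_marked (dec_of N T P I tr mk i r)
         then Some (THE i. i \<in> {1..N} - C \<and> is_marked (dec_of N T P I tr mk i r))
         else None))
   \<and> adv_sig_ok N C tr"

definition honest_sig_ok :: "nat \<Rightarrow> nat \<Rightarrow> nat \<Rightarrow> nat set \<Rightarrow> trace \<Rightarrow> bool" where
  "honest_sig_ok N K T C tr \<longleftrightarrow>
    (\<forall>i\<in>{1..N} - C. \<forall>t<K * T. \<forall>j\<in>{1..N}. \<forall>m\<in>set (tr t i j). \<forall>j' x.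
       MSig j' x \<in> subterms m \<and> j' \<noteq> i \<longrightarrow>
       (\<exists>s<t. \<exists>k\<in>{1..N}. \<exists>m'\<in>set (tr s k i). MSig j' x \<in> subterms m'))"

definition msgs_in_round :: "nat \<Rightarrow> nat \<Rightarrow> nat set \<Rightarrow> trace \<Rightarrow> nat \<Rightarrow> nat" where
  "msgs_in_round N T C tr r =
     (\<Sum>t\<in>{(r - 1) * T..<r * T}. \<Sum>i\<in>{1..N} - C. \<Sum>j\<in>{1..N}. length (tr t i j))"

definition sigs_in_round :: "nat \<Rightarrow> nat \<Rightarrow> nat set \<Rightarrow> trace \<Rightarrow> nat \<Rightarrow> nat" where
  "sigs_in_round N T C tr r =
     (\<Sum>t\<in>{(r - 1) * T..<r * T}. \<Sum>i\<in>{1..N} - C. \<Sum>j\<in>{1..N}. sum_list (map nsigs (tr t i j)))"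

definition round_ok :: "nat \<Rightarrow> nat \<Rightarrow> protocol \<Rightarrow> nat set \<Rightarrow> (nat \<Rightarrow> nat) \<Rightarrow> trace
                        \<Rightarrow> (nat \<Rightarrow> nat option) \<Rightarrow> nat \<Rightarrow> bool" where
  "round_ok N T P C I tr mk r \<longleftrightarrow>
     card {i \<in> {1..N} - C. is_marked (dec_of N T P I tr mk i r)} \<le> 1
   \<and> (\<forall>m n. mk r = Some m \<and> m \<in> {1..N} - C \<and> I r = n \<and> n \<in> {1..N} - C \<longrightarrow>
        dec_of N T P I tr mk n r = Marked (Some m))
   \<and> (\<forall>i d. mk r = None \<and> i \<in> {1..N} - C \<and> dec_of N T P I tr mk i r = Marked d \<longrightarrow>
        d \<notin> Some ` ({1..N} - C))"

text \<open>P solves the K-round Marker Problem with rounds of T steps tolerating f faults,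
  with at most M messages and S signatures sent by honest processes per round.\<close>
definition marker_solution :: "nat \<Rightarrow> nat \<Rightarrow> nat \<Rightarrow> nat \<Rightarrow> protocol \<Rightarrow> nat \<Rightarrow> nat \<Rightarrow> bool" where
  "marker_solution N f K T P M S \<longleftrightarrow>
    (\<forall>C I tr mk. C \<subseteq> {1..N} \<and> card C \<le> f \<and> (\<forall>r. I r \<in> {1..N})
        \<and> execution N K T P C I tr mk \<longrightarrow>
       honest_sig_ok N K T C tr
       \<and> (\<forall>r\<in>{1..K}. round_ok N T P C I tr mk r
            \<and> msgs_in_round N T C tr r \<le> M \<and> sigs_in_round N T C tr r \<le> S))"

end

theory Submission
  imports Defs
begin


fun base :: "msg \<Rightarrow> (nat \<times> nat) option" where
  "base (MPair (MNum r) (MNum v)) = Some (r, v)"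
| "base _ = None"

fun cinfo :: "msg \<Rightarrow> (nat list \<times> nat \<times> nat \<times> nat) option" where
  "cinfo (MSig s m) = (case base m of Some (r, v) \<Rightarrow> Some ([], s, r, v)
      | None \<Rightarrow> (case cinfo m of None \<Rightarrow> None | Some (ss, x, r, v) \<Rightarrow> Some (s # ss, x, r, v)))"
| "cinfo _ = None"

definition sigma :: "nat \<Rightarrow> nat \<Rightarrow> nat \<Rightarrow> msg" where
  "sigma x r v = MSig x (MPair (MNum r) (MNum v))"

lemma cinfo_sigma[simp]: "cinfo (sigma x r v) = Some ([], x, r, v)"
  by (simp add: sigma_def)

lemma cinfo_SomeD: "cinfo c = Some z \<Longrightarrow> \<exists>s m. c = MSig s m"
  by (cases c) auto

lemma base_MSig[simp]: "base (MSig a b) = None" by simp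

lemma cinfo_MSig_chain: "cinfo c = Some (ss, x, r, v) \<Longrightarrow> cinfo (MSig s c) = Some (s # ss, x, r, v)"
  using cinfo_SomeD[of c] by auto

lemma subterms_self[simp]: "m \<in> subterms m"
  by (cases m) auto

lemma subterms_trans: "a \<in> subterms b \<Longrightarrow> subterms a \<subseteq> subterms b"
  by (induction b) auto

lemma cinfo_nsigs: "cinfo c = Some (ss, x, r, v) \<Longrightarrow> nsigs c = Suc (length ss)"
proof (induction c arbitrary: ss)
  case (MSig s m)
  show ?case
  proof (cases "base m")
    case None
    then obtain ss' where "cinfo m = Some (ss', x, r, v)" "ss = s # ss'"
      using MSig.prems by (auto split: option.splits)
    then show ?thesis using MSig.IH by simp
  next
    case (Some a)
    then show ?thesis using MSig.prems by (cases m rule: base.cases) auto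
  qed
qed auto

lemma cinfo_sigma_sub: "cinfo c = Some (ss, x, r, v) \<Longrightarrow> sigma x r v \<in> subterms c"
proof (induction c arbitrary: ss)
  case (MSig s m)
  show ?case
  proof (cases "base m")
    case None
    then obtain ss' where "cinfo m = Some (ss', x, r, v)"
      using MSig.prems by (auto split: option.splits)
    then show ?thesis using MSig.IH by simp
  next
    case (Some a)
    then show ?thesis using MSig.prems by (cases m rule: base.cases) (auto simp: sigma_def)
  qed
qed auto

lemma cinfo_pos: "cinfo c = Some (a @ s # b, x, r, v) \<Longrightarrow>
   \<exists>c'. MSig s c' \<in> subterms c \<and> cinfo c' = Some (b, x, r, v)"
proof (induction c arbitrary: a)
  case (MSig s0 m)
  show ?case
  proof (cases "base m")
    case None
    then obtain ss' where m: "cinfo m = Some (ss', x, r, v)" "a @ s # b = s0 # ss'"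
      using MSig.prems by (auto split: option.splits)
    show ?thesis
    proof (cases a)
      case Nil
      then show ?thesis using m by auto
    next
      case (Cons a0 a')
      then have "cinfo m = Some (a' @ s # b, x, r, v)" using m by auto
      from MSig.IH[OF this] show ?thesis by auto
    qed
  next
    case (Some z)
    then show ?thesis using MSig.prems by (cases m rule: base.cases) auto
  qed
qed auto

fun accL :: "(nat \<Rightarrow> nat list) \<Rightarrow> nat \<Rightarrow> nat set" where
  "accL vs 0 = {}"
| "accL vs (Suc j) = accL vs j \<union> set (vs j)"

definition newL :: "(nat \<Rightarrow> nat list) \<Rightarrow> nat \<Rightarrow> nat list" where
  "newL vs j = remdups (filter (\<lambda>v. v \<notin> accL vs j) (vs j))"

definition fwdL :: "(nat \<Rightarrow> nat list) \<Rightarrow> nat \<Rightarrow> nat list" where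
  "fwdL vs j = (if accL vs j = {} then take 2 (newL vs j)
                else if card (accL vs j) = 1 then take 1 (newL vs j) else [])"

definition fwS :: "(nat \<Rightarrow> nat list) \<Rightarrow> nat \<Rightarrow> nat set" where
  "fwS vs j = (\<Union>i<j. set (fwdL vs i))"

lemma accL_finite[simp]: "finite (accL vs j)"
  by (induction j) auto

lemma accL_mono: "i \<le> j \<Longrightarrow> accL vs i \<subseteq> accL vs j"
  by (induction j) (auto simp: le_Suc_eq)

lemma accL_iff: "v \<in> accL vs j \<longleftrightarrow> (\<exists>i<j. v \<in> set (vs i))"
  by (induction j) (auto simp: less_Suc_eq)

lemma fwdL_sub: "set (fwdL vs j) \<subseteq> set (vs j) - accL vs j"
  unfolding fwdL_def newL_def by (auto dest: in_set_takeD)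

lemma fwdL_distinct: "distinct (fwdL vs j)"
  unfolding fwdL_def newL_def by auto

lemma fwS_Suc: "fwS vs (Suc j) = fwS vs j \<union> set (fwdL vs j)"
  unfolding fwS_def by (auto simp: lessThan_Suc)

lemma fwd_inv:
  "fwS vs j \<subseteq> accL vs j \<and> (card (accL vs j) \<le> 1 \<longrightarrow> fwS vs j = accL vs j)
   \<and> (2 \<le> card (accL vs j) \<longrightarrow> card (fwS vs j) = 2)
   \<and> (\<Sum>i<j. length (fwdL vs i)) = card (fwS vs j)"
proof (induction j)
  case 0
  then show ?case by (simp add: fwS_def)
next
  case (Suc j)
  let ?A = "accL vs j" and ?F = "fwS vs j" and ?n = "newL vs j"
  have dn: "distinct ?n" by (simp add: newL_def)
  have sn: "set ?n = set (vs j) - ?A" by (auto simp: newL_def)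
  have A': "accL vs (Suc j) = ?A \<union> set ?n" using sn by auto
  have disj: "?A \<inter> set ?n = {}" using sn by auto
  have cardA': "card (accL vs (Suc j)) = card ?A + length ?n"
    using A' disj card_Un_disjoint[of ?A "set ?n"] distinct_card[OF dn] by simp
  have FA: "?F \<subseteq> ?A" using Suc.IH by blast
  have fsub: "set (fwdL vs j) \<subseteq> set ?n" unfolding fwdL_def by (auto dest: in_set_takeD)
  have dF: "?F \<inter> set (fwdL vs j) = {}" using FA fsub disj by blast
  have cF': "card (fwS vs (Suc j)) = card ?F + length (fwdL vs j)"
    using fwS_Suc[of vs j] dF card_Un_disjoint[of ?F "set (fwdL vs j)"]
      distinct_card[OF fwdL_distinct] by (simp add: fwS_def)
  have sum': "(\<Sum>i<Suc j. length (fwdL vs i)) = card (fwS vs (Suc j))"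
    using Suc.IH cF' by simp
  have sub': "fwS vs (Suc j) \<subseteq> accL vs (Suc j)" using FA fsub A' fwS_Suc[of vs j] by blast
  show ?case
  proof (cases "?A = {}")
    case True
    then have F0: "?F = {}" using FA by blast
    have fw: "fwdL vs j = take 2 ?n" using True by (simp add: fwdL_def)
    have "card (accL vs (Suc j)) = length ?n" using cardA' True by simp
    moreover have "length ?n \<le> 1 \<Longrightarrow> fwS vs (Suc j) = accL vs (Suc j)"
      using fw F0 A' True fwS_Suc[of vs j] by (simp add: take_all)
    moreover have "2 \<le> length ?n \<Longrightarrow> card (fwS vs (Suc j)) = 2"
      using cF' F0 fw by simp
    ultimately show ?thesis using sub' sum' by auto
  next
    case False
    then have cA: "card ?A \<ge> 1" by (simp add: Suc_leI card_gt_0_iff)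
    show ?thesis
    proof (cases "card ?A = 1")
      case True
      have FeA: "?F = ?A" using Suc.IH True by simp
      have fw: "fwdL vs j = take 1 ?n" using True False by (simp add: fwdL_def)
      show ?thesis
      proof (cases ?n)
        case Nil
        then show ?thesis using fw FeA A' fwS_Suc[of vs j] sum' True by simp
      next
        case (Cons a l)
        then have "card (fwS vs (Suc j)) = 2" using cF' fw FeA True by simp
        moreover have "card (accL vs (Suc j)) \<ge> 2" using cardA' True Cons by simp
        ultimately show ?thesis using sub' sum' by auto
      qed
    next
      case c2: False
      then have "2 \<le> card ?A" using cA by simp
      then have "card ?F = 2" using Suc.IH by simp
      moreover have "fwdL vs j = []" using False c2 by (simp add: fwdL_def)
      moreover have "card (accL vs (Suc j)) \<ge> 2" using cardA' \<open>2 \<le> card ?A\<close> by simp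
      ultimately have "fwS vs (Suc j) = ?F" "card (fwS vs (Suc j)) = 2" "card (accL vs (Suc j)) \<ge> 2"
        using fwS_Suc[of vs j] by auto
      then show ?thesis using sub' sum' by simp
    qed
  qed
qed

lemma fwd_cover: "v \<in> accL vs j \<Longrightarrow> v \<in> fwS vs j \<or> 2 \<le> card (fwS vs j)"
proof (cases "card (accL vs j) \<le> 1")
  case True
  assume "v \<in> accL vs j"
  then show ?thesis using True fwd_inv[of vs j] by simp
next
  case False
  then show ?thesis using fwd_inv[of vs j] by simp
qed

lemma fwd_total: "(\<Sum>i<j. length (fwdL vs i)) \<le> 2"
proof -
  have "card (fwS vs j) \<le> 2"
  proof (cases "card (accL vs j) \<le> 1")
    case True
    then show ?thesis using fwd_inv[of vs j] by simp
  next
    case False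
    then show ?thesis using fwd_inv[of vs j] by simp
  qed
  then show ?thesis using fwd_inv[of vs j] by simp
qed


definition comm :: "nat \<Rightarrow> nat \<Rightarrow> bool" where "comm f j \<longleftrightarrow> 1 \<le> j \<and> j \<le> Suc f"

definition cval :: "msg \<Rightarrow> nat" where
  "cval c = (case cinfo c of Some (ss, x, r, v) \<Rightarrow> v | None \<Rightarrow> 0)"

definition valid :: "nat \<Rightarrow> nat \<Rightarrow> nat \<Rightarrow> nat \<Rightarrow> nat \<Rightarrow> msg \<Rightarrow> bool" where
  "valid N p x r j c \<longleftrightarrow> (\<exists>ss v. cinfo c = Some (ss, x, r, v) \<and> length ss = j \<and> distinct ss
      \<and> set ss \<subseteq> {1..N} \<and> p \<notin> set ss)"

definition rlist :: "nat \<Rightarrow> (nat \<Rightarrow> nat \<Rightarrow> msg list) \<Rightarrow> nat \<Rightarrow> msg list" where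
  "rlist N rc s = concat (map (rc s) [1..<Suc N])"

definition vals :: "nat \<Rightarrow> nat \<Rightarrow> (nat \<Rightarrow> nat \<Rightarrow> msg list) \<Rightarrow> nat \<Rightarrow> nat \<Rightarrow> nat \<Rightarrow> nat \<Rightarrow> nat list" where
  "vals N T rc p x r j = map cval (filter (valid N p x r j) (rlist N rc ((r - 1) * T + j)))"

definition chain_for :: "nat \<Rightarrow> nat \<Rightarrow> (nat \<Rightarrow> nat \<Rightarrow> msg list) \<Rightarrow> nat \<Rightarrow> nat \<Rightarrow> nat \<Rightarrow> nat \<Rightarrow> nat \<Rightarrow> msg" where
  "chain_for N T rc p x r j v = hd (filter (\<lambda>c. valid N p x r j c \<and> cval c = v) (rlist N rc ((r - 1) * T + j)))"

fun beln :: "nat \<Rightarrow> nat \<Rightarrow> (nat \<Rightarrow> nat \<Rightarrow> msg list) \<Rightarrow> nat \<Rightarrow> nat \<Rightarrow> nat option" where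
  "beln N T rc p 0 = Some 1"
| "beln N T rc p (Suc r) = (case beln N T rc p r of None \<Rightarrow> None
     | Some x \<Rightarrow> (if card (accL (vals N T rc p x (Suc r)) T) = 1
                  then Some (the_elem (accL (vals N T rc p x (Suc r)) T)) else None))"

definition sendF :: "nat \<Rightarrow> nat \<Rightarrow> nat \<Rightarrow> nat \<Rightarrow> view \<Rightarrow> nat \<Rightarrow> msg list" where
  "sendF N f i t V j = (let T = f + 3; r = t div T + 1; k = t mod T in
    if k = 0 then (case snd V r of Some n \<Rightarrow> if comm f j then [sigma i r n] else [] | None \<Rightarrow> [])
    else (case beln N T (fst V) i (r - 1) of None \<Rightarrow> []
       | Some x \<Rightarrow> if comm f i \<or> comm f j
           then map (\<lambda>v. MSig i (chain_for N T (fst V) i x r (k - 1) v)) (fwdL (vals N T (fst V) i x r) (k - 1))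
           else []))"

definition decF :: "nat \<Rightarrow> nat \<Rightarrow> nat \<Rightarrow> nat \<Rightarrow> view \<Rightarrow> decision" where
  "decF N f i r V = (let T = f + 3 in case beln N T (fst V) i (r - 1) of None \<Rightarrow> Unmarked
    | Some x \<Rightarrow> if accL (vals N T (fst V) i x r) T = {i} then Marked (Some x) else Unmarked)"

lemma accL_cong: "(\<And>i. i < j \<Longrightarrow> vs1 i = vs2 i) \<Longrightarrow> accL vs1 j = accL vs2 j"
  by (induction j) auto

lemma fwdL_cong: "(\<And>i. i \<le> j \<Longrightarrow> vs1 i = vs2 i) \<Longrightarrow> fwdL vs1 j = fwdL vs2 j"
proof -
  assume h: "\<And>i. i \<le> j \<Longrightarrow> vs1 i = vs2 i"
  have "accL vs1 j = accL vs2 j" by (rule accL_cong) (use h in auto)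
  then show ?thesis using h[of j] by (simp add: fwdL_def newL_def)
qed

lemma vals_cong: "\<forall>s<b. rc1 s = rc2 s \<Longrightarrow> (r - 1) * T + j < b \<Longrightarrow>
   vals N T rc1 p x r j = vals N T rc2 p x r j"
  by (simp add: vals_def rlist_def)

lemma chain_for_cong: "\<forall>s<b. rc1 s = rc2 s \<Longrightarrow> (r - 1) * T + j < b \<Longrightarrow>
   chain_for N T rc1 p x r j v = chain_for N T rc2 p x r j v"
  by (simp add: chain_for_def rlist_def)

lemma acc_cong:
  assumes h: "\<forall>s<b. rc1 s = rc2 s" and hb: "(r - 1) * T + j \<le> b"
  shows "accL (vals N T rc1 p x r) j = accL (vals N T rc2 p x r) j"
proof (rule accL_cong)
  fix i assume "i < j"
  then have "(r - 1) * T + i < b" using hb by linarith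
  then show "vals N T rc1 p x r i = vals N T rc2 p x r i"
    using vals_cong h by blast
qed

lemma beln_cong: "\<forall>s<b. rc1 s = rc2 s \<Longrightarrow> r * T \<le> b \<Longrightarrow>
   beln N T rc1 p r = beln N T rc2 p r"
proof (induction r)
  case 0
  then show ?case by simp
next
  case (Suc r)
  have "r * T \<le> b" using Suc.prems by simp
  then have IH: "beln N T rc1 p r = beln N T rc2 p r" using Suc by blast
  have "(Suc r - 1) * T + T \<le> b" using Suc.prems(2) by simp
  then have "\<And>x. accL (vals N T rc1 p x (Suc r)) T = accL (vals N T rc2 p x (Suc r)) T"
    using acc_cong Suc.prems(1) by blast
  then show ?case using IH by (cases "beln N T rc2 p r") simp_all
qed

lemma sendF_cong:
  assumes "\<forall>s<t. fst V1 s = fst V2 s" "snd V1 = snd V2"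
  shows "sendF N f i t V1 j = sendF N f i t V2 j"
proof -
  let ?T = "f + 3"
  let ?r = "t div ?T + 1" and ?k = "t mod ?T"
  have tk: "t = (?r - 1) * ?T + ?k" by (simp add: div_mult_mod_eq)
  have "(?r - 1) * ?T \<le> t" by (metis le_add1 tk)
  then have b: "beln N ?T (fst V1) i (?r - 1) = beln N ?T (fst V2) i (?r - 1)"
    using beln_cong assms(1) by blast
  have lt: "(?r - 1) * ?T + i' < t" if "?k \<noteq> 0" "i' \<le> ?k - 1" for i'
  proof -
    have "t div ?T * ?T + t mod ?T = t" by (rule div_mult_mod_eq)
    then show ?thesis using that by simp
  qed
  have "fwdL (vals N ?T (fst V1) i x ?r) (?k - 1) = fwdL (vals N ?T (fst V2) i x ?r) (?k - 1)"
    if k0: "?k \<noteq> 0" for x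
  proof (rule fwdL_cong)
    fix i' assume "i' \<le> ?k - 1"
    then have "(?r - 1) * ?T + i' < t" using lt k0 by blast
    then show "vals N ?T (fst V1) i x ?r i' = vals N ?T (fst V2) i x ?r i'"
      using vals_cong assms(1) by blast
  qed
  moreover have "chain_for N ?T (fst V1) i x ?r (?k - 1) v = chain_for N ?T (fst V2) i x ?r (?k - 1) v"
    if k0: "?k \<noteq> 0" for x v
  proof -
    have "(?r - 1) * ?T + (?k - 1) < t" using lt k0 by blast
    then show ?thesis using chain_for_cong assms(1) by blast
  qed
  ultimately show ?thesis using b assms(2) unfolding sendF_def Let_def
    by (cases "?k = 0") (auto split: option.splits)
qed

lemma decF_cong:
  assumes "\<forall>s < r * (f + 3). fst V1 s = fst V2 s" "1 \<le> r"
  shows "decF N f i r V1 = decF N f i r V2"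
proof -
  let ?T = "f + 3"
  have "(r - 1) * ?T \<le> r * ?T" by (intro mult_le_mono1) simp
  then have b: "beln N ?T (fst V1) i (r - 1) = beln N ?T (fst V2) i (r - 1)"
    using beln_cong assms(1) by blast
  have "(r - 1) * ?T + ?T \<le> r * ?T" using assms(2) by (cases r) auto
  then have "\<And>x. accL (vals N ?T (fst V1) i x r) ?T = accL (vals N ?T (fst V2) i x r) ?T"
    using acc_cong assms(1) by blast
  then show ?thesis using b unfolding decF_def Let_def by (auto split: option.splits)
qed


locale ctx =
  fixes N f K :: nat and C :: "nat set" and I :: "nat \<Rightarrow> nat" and tr :: trace
    and mk :: "nat \<Rightarrow> nat option"
  assumes fN: "f < N" and CN: "C \<subseteq> {1..N}" and cardC: "card C \<le> f"
    and Irange: "\<forall>r. I r \<in> {1..N}"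
    and ex: "execution N K (f + 3) (sendF N f, decF N f) C I tr mk"
begin

abbreviation "TT \<equiv> f + 3"
abbreviation "H \<equiv> {1..N} - C"

definition rc :: "nat \<Rightarrow> nat \<Rightarrow> nat \<Rightarrow> msg list" where
  "rc p s k = (if k \<in> {1..N} then tr s k p else [])"
definition bel :: "nat \<Rightarrow> nat \<Rightarrow> nat option" where
  "bel p r = beln N TT (rc p) p (r - 1)"
definition A :: "nat \<Rightarrow> nat \<Rightarrow> nat \<Rightarrow> nat \<Rightarrow> nat set" where
  "A p x r = accL (vals N TT (rc p) p x r)"
definition fw :: "nat \<Rightarrow> nat \<Rightarrow> nat \<Rightarrow> nat \<Rightarrow> nat list" where
  "fw p x r = fwdL (vals N TT (rc p) p x r)"
definition cf :: "nat \<Rightarrow> nat \<Rightarrow> nat \<Rightarrow> nat \<Rightarrow> nat \<Rightarrow> msg" where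
  "cf p x r j v = chain_for N TT (rc p) p x r j v"

lemma ex_honest: "p \<in> H \<Longrightarrow> t < K * TT \<Longrightarrow>
   tr t p j = sendF N f p t (view_of N tr (inputs mk I) p t (t div TT + 1)) j"
  using ex unfolding execution_def by auto

lemma ex_mk1: "mk 1 = (if 1 \<in> C then None else Some 1)"
  using ex unfolding execution_def by auto

lemma ex_mkS: "r \<ge> 1 \<Longrightarrow> mk (r + 1) =
        (if \<exists>!i. i \<in> H \<and> is_marked (dec_of N TT (sendF N f, decF N f) I tr mk i r)
         then Some (THE i. i \<in> H \<and> is_marked (dec_of N TT (sendF N f, decF N f) I tr mk i r))
         else None)"
  using ex unfolding execution_def by auto

lemma ex_adv: "adv_sig_ok N C tr"
  using ex unfolding execution_def by auto

lemma send_expl: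
  assumes "p \<in> H" "t < K * TT"
  shows "tr t p j = (let r = t div TT + 1; k = t mod TT in
     if k = 0 then (if mk r = Some p \<and> comm f j then [sigma p r (I r)] else [])
     else (case bel p r of None \<Rightarrow> []
       | Some x \<Rightarrow> if comm f p \<or> comm f j then map (\<lambda>v. MSig p (cf p x r (k - 1) v)) (fw p x r (k - 1)) else []))"
proof -
  let ?V = "view_of N tr (inputs mk I) p t (t div TT + 1)"
  have "sendF N f p t ?V j = sendF N f p t (rc p, snd ?V) j"
    by (rule sendF_cong) (auto simp: view_of_def rc_def)
  then show ?thesis using ex_honest[OF assms]
    by (simp add: sendF_def view_of_def inputs_def bel_def fw_def cf_def Let_def split: option.splits)
qed

lemma dec_expl:
  assumes "1 \<le> r"
  shows "dec_of N TT (sendF N f, decF N f) I tr mk p r =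
    (case bel p r of None \<Rightarrow> Unmarked | Some x \<Rightarrow> if A p x r TT = {p} then Marked (Some x) else Unmarked)"
proof -
  let ?V = "view_of N tr (inputs mk I) p (r * TT) r"
  have "decF N f p r ?V = decF N f p r (rc p, snd ?V)"
    by (rule decF_cong) (use assms in \<open>auto simp: view_of_def rc_def\<close>)
  then have "dec_of N TT (sendF N f, decF N f) I tr mk p r = decF N f p r (rc p, snd ?V)"
    by (simp add: dec_of_def)
  also have "\<dots> = (case bel p r of None \<Rightarrow> Unmarked | Some x \<Rightarrow> if A p x r TT = {p} then Marked (Some x) else Unmarked)"
    unfolding decF_def bel_def A_def Let_def fst_conv by (rule refl)
  finally show ?thesis .
qed

end


context ctx begin

lemma rlist_mem: "c \<in> set (rlist N (rc p) s) \<longleftrightarrow> (\<exists>k\<in>{1..N}. c \<in> set (tr s k p))"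
  by (auto simp: rlist_def rc_def)

lemma vals_mem: "v \<in> set (vals N TT (rc p) p x r j) \<longleftrightarrow>
   (\<exists>c. c \<in> set (rlist N (rc p) ((r - 1) * TT + j)) \<and> valid N p x r j c \<and> cval c = v)"
  by (auto simp: vals_def)

lemma valid_cinfo: "valid N p x r j c \<Longrightarrow> \<exists>ss. cinfo c = Some (ss, x, r, cval c) \<and> length ss = j
    \<and> distinct ss \<and> set ss \<subseteq> {1..N} \<and> p \<notin> set ss"
  by (auto simp: valid_def cval_def)

lemma fw_vals: "v \<in> set (fw p x r j) \<Longrightarrow> v \<in> set (vals N TT (rc p) p x r j)"
  using fwdL_sub unfolding fw_def by blast

lemma cf_facts:
  assumes "v \<in> set (fw p x r j)"
  shows "cf p x r j v \<in> set (rlist N (rc p) ((r - 1) * TT + j)) \<and> valid N p x r j (cf p x r j v)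
     \<and> cval (cf p x r j v) = v"
proof -
  let ?L = "filter (\<lambda>c. valid N p x r j c \<and> cval c = v) (rlist N (rc p) ((r - 1) * TT + j))"
  have "?L \<noteq> []" using fw_vals[OF assms] vals_mem by (auto simp: filter_empty_conv)
  then have "hd ?L \<in> set ?L" by (rule hd_in_set)
  then have "hd ?L \<in> set (rlist N (rc p) ((r - 1) * TT + j)) \<and> valid N p x r j (hd ?L) \<and> cval (hd ?L) = v"
    by (simp only: set_filter mem_Collect_eq)
  then show ?thesis unfolding cf_def chain_for_def .
qed

lemma A_Suc: "A p x r (Suc j) = A p x r j \<union> set (vals N TT (rc p) p x r j)"
  by (simp add: A_def)

lemma A_mono: "i \<le> j \<Longrightarrow> A p x r i \<subseteq> A p x r j"
  unfolding A_def by (rule accL_mono)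

lemma A_finite[simp]: "finite (A p x r j)"
  unfolding A_def by simp

lemma A_iff: "v \<in> A p x r j \<longleftrightarrow> (\<exists>i<j. v \<in> set (vals N TT (rc p) p x r i))"
  unfolding A_def by (rule accL_iff)

lemma tdecomp:
  assumes "t mod TT \<noteq> 0"
  shows "(t div TT + 1 - 1) * TT + (t mod TT - 1) = t - 1" "1 \<le> t"
proof -
  have "t div TT * TT + t mod TT = t" by (rule div_mult_mod_eq)
  then show "(t div TT + 1 - 1) * TT + (t mod TT - 1) = t - 1" "1 \<le> t" using assms by auto
qed

lemma struct:
  assumes "p \<in> H" "t < K * TT" "m \<in> set (tr t p j)"
  shows "(t mod TT = 0 \<and> mk (t div TT + 1) = Some p \<and> m = sigma p (t div TT + 1) (I (t div TT + 1)))
   \<or> (t mod TT \<noteq> 0 \<and> (\<exists>x v. bel p (t div TT + 1) = Some x \<and> v \<in> set (fw p x (t div TT + 1) (t mod TT - 1))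
          \<and> m = MSig p (cf p x (t div TT + 1) (t mod TT - 1) v)))"
proof (cases "t mod TT = 0")
  case True
  then have "m \<in> set (if mk (t div TT + 1) = Some p \<and> comm f j then [sigma p (t div TT + 1) (I (t div TT + 1))] else [])"
    using assms(3) send_expl[OF assms(1,2), of j] by (simp add: Let_def)
  then show ?thesis using True by (cases "mk (t div TT + 1) = Some p \<and> comm f j") auto
next
  case False
  show ?thesis
  proof (cases "bel p (t div TT + 1)")
    case None
    then show ?thesis using assms(3) send_expl[OF assms(1,2), of j] False by (simp add: Let_def)
  next
    case (Some x)
    then have "m \<in> set (if comm f p \<or> comm f j then map (\<lambda>v. MSig p (cf p x (t div TT + 1) (t mod TT - 1) v)) (fw p x (t div TT + 1) (t mod TT - 1)) else [])"
      using assms(3) send_expl[OF assms(1,2), of j] False by (simp add: Let_def)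
    then obtain v where "v \<in> set (fw p x (t div TT + 1) (t mod TT - 1))" "m = MSig p (cf p x (t div TT + 1) (t mod TT - 1) v)"
      by (cases "comm f p \<or> comm f j") auto
    then show ?thesis using Some False by blast
  qed
qed

lemma struct2:
  assumes "p \<in> H" "t < K * TT" "m \<in> set (tr t p j)"
  shows "(\<exists>r n. m = sigma p r n) \<or> (\<exists>c. m = MSig p c \<and> 1 \<le> t \<and> (\<exists>k\<in>{1..N}. c \<in> set (tr (t - 1) k p)))"
  using struct[OF assms]
proof
  assume "t mod TT \<noteq> 0 \<and> (\<exists>x v. bel p (t div TT + 1) = Some x \<and> v \<in> set (fw p x (t div TT + 1) (t mod TT - 1))
          \<and> m = MSig p (cf p x (t div TT + 1) (t mod TT - 1) v))"
  then obtain x v where h: "t mod TT \<noteq> 0" "v \<in> set (fw p x (t div TT + 1) (t mod TT - 1))"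
     "m = MSig p (cf p x (t div TT + 1) (t mod TT - 1) v)" by blast
  have "cf p x (t div TT + 1) (t mod TT - 1) v \<in> set (rlist N (rc p) (t - 1))"
    using cf_facts[OF h(2)] tdecomp[OF h(1)] by simp
  then obtain k where "k \<in> {1..N}" "cf p x (t div TT + 1) (t mod TT - 1) v \<in> set (tr (t - 1) k p)"
    unfolding rlist_mem by blast
  then show ?thesis using h(3) tdecomp(2)[OF h(1)] by blast
next
  assume "t mod TT = 0 \<and> mk (t div TT + 1) = Some p \<and> m = sigma p (t div TT + 1) (I (t div TT + 1))"
  then show ?thesis by blast
qed

lemma sub_sigma: "MSig x y \<in> subterms (sigma p r n) \<Longrightarrow> MSig x y = sigma p r n"
  by (auto simp: sigma_def)

lemma honest_sig: "honest_sig_ok N K TT C tr"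
  unfolding honest_sig_ok_def
proof (intro ballI allI impI)
  fix i t j m j' x
  assume i: "i \<in> H" and t: "t < K * TT" and m: "m \<in> set (tr t i j)"
    and h: "MSig j' x \<in> subterms m \<and> j' \<noteq> i"
  show "\<exists>s<t. \<exists>k\<in>{1..N}. \<exists>m'\<in>set (tr s k i). MSig j' x \<in> subterms m'"
    using struct2[OF i t m]
  proof
    assume "\<exists>r n. m = sigma i r n"
    then show ?thesis using h sub_sigma by (auto simp: sigma_def)
  next
    assume "\<exists>c. m = MSig i c \<and> 1 \<le> t \<and> (\<exists>k\<in>{1..N}. c \<in> set (tr (t - 1) k i))"
    then obtain c k where c: "m = MSig i c" "1 \<le> t" "k \<in> {1..N}" "c \<in> set (tr (t - 1) k i)" by blast
    then have "MSig j' x \<in> subterms c" using h by auto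
    then show ?thesis using c by (intro exI[of _ "t - 1"]) auto
  qed
qed

lemma adv_rule: "c \<in> C \<Longrightarrow> m \<in> set (tr t c j) \<Longrightarrow> MSig j' x \<in> subterms m \<Longrightarrow> j' \<in> H \<Longrightarrow>
   \<exists>s<t. \<exists>k\<in>{1..N}. \<exists>c'\<in>C. \<exists>m'\<in>set (tr s k c'). MSig j' x \<in> subterms m'"
  using ex_adv unfolding adv_sig_ok_def by blast

lemma unforge:
  "t < K * TT \<Longrightarrow> k \<in> {1..N} \<Longrightarrow> m \<in> set (tr t k q) \<Longrightarrow> x \<in> H \<Longrightarrow> MSig x y \<in> subterms m \<Longrightarrow>
   \<exists>t'\<le>t. \<exists>j. MSig x y \<in> set (tr t' x j)"
proof (induction t arbitrary: k q m rule: less_induct)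
  case (less t)
  show ?case
  proof (cases "k \<in> C")
    case True
    obtain s k' c' m' where "s < t" "k' \<in> {1..N}" "c' \<in> C" "m' \<in> set (tr s k' c')" "MSig x y \<in> subterms m'"
      using adv_rule[OF True less.prems(3) less.prems(5) less.prems(4)] by blast
    moreover have "s < K * TT" using \<open>s < t\<close> less.prems(1) by simp
    ultimately obtain t' j where "t' \<le> s" "MSig x y \<in> set (tr t' x j)"
      using less.IH[OF \<open>s < t\<close> \<open>s < K * TT\<close> \<open>k' \<in> {1..N}\<close> \<open>m' \<in> set (tr s k' c')\<close> less.prems(4) \<open>MSig x y \<in> subterms m'\<close>] by blast
    then show ?thesis using \<open>s < t\<close> by (intro exI[of _ t']) auto
  next
    case False
    then have kH: "k \<in> H" using less.prems by auto
    show ?thesis using struct2[OF kH less.prems(1,3)]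
    proof
      assume "\<exists>r n. m = sigma k r n"
      then have "MSig x y = m" "x = k" using sub_sigma less.prems(5) by (auto simp: sigma_def)
      then have "MSig x y \<in> set (tr t x q)" using less.prems(3) by simp
      then show ?thesis by (intro exI[of _ t]) auto
    next
      assume "\<exists>c. m = MSig k c \<and> 1 \<le> t \<and> (\<exists>k'\<in>{1..N}. c \<in> set (tr (t - 1) k' k))"
      then obtain c k' where c: "m = MSig k c" "1 \<le> t" "k' \<in> {1..N}" "c \<in> set (tr (t - 1) k' k)" by blast
      show ?thesis
      proof (cases "MSig x y = m")
        case True
        then have "MSig x y \<in> set (tr t x q)" using c less.prems(3) by simp
        then show ?thesis by (intro exI[of _ t]) auto
      next
        case False
        then have "MSig x y \<in> subterms c" using less.prems(5) c by auto
        moreover have "t - 1 < t" "t - 1 < K * TT" using c(2) less.prems(1) by auto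
        ultimately obtain t' j where "t' \<le> t - 1" "MSig x y \<in> set (tr t' x j)"
          using less.IH[OF \<open>t - 1 < t\<close> \<open>t - 1 < K * TT\<close> c(3) c(4) less.prems(4)] by blast
        then show ?thesis by (intro exI[of _ t']) auto
      qed
    qed
  qed
qed

end


context ctx begin

lemma sigma_neq_chain: "valid N p x r j c \<Longrightarrow> MSig q c \<noteq> sigma a b d"
proof
  assume v: "valid N p x r j c" and e: "MSig q c = sigma a b d"
  then have "c = MPair (MNum b) (MNum d)" by (simp add: sigma_def)
  then show False using valid_cinfo[OF v] by simp
qed

lemma top_chain:
  assumes xH: "x \<in> H" and t: "t < K * TT" and m: "MSig x c \<in> set (tr t x j)"
    and ci: "cinfo c = Some (ss, y, r, v)"
  shows "t mod TT \<noteq> 0 \<and> r = t div TT + 1 \<and> bel x r = Some y \<and> length ss = t mod TT - 1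
      \<and> v \<in> A x y r (t mod TT)"
  using struct[OF xH t m]
proof
  assume "t mod TT = 0 \<and> mk (t div TT + 1) = Some x \<and> MSig x c = sigma x (t div TT + 1) (I (t div TT + 1))"
  then have "c = MPair (MNum (t div TT + 1)) (MNum (I (t div TT + 1)))" by (simp add: sigma_def)
  then show ?thesis using ci by simp
next
  assume "t mod TT \<noteq> 0 \<and> (\<exists>x0 v0. bel x (t div TT + 1) = Some x0 \<and> v0 \<in> set (fw x x0 (t div TT + 1) (t mod TT - 1))
          \<and> MSig x c = MSig x (cf x x0 (t div TT + 1) (t mod TT - 1) v0))"
  then obtain y0 v0 where h: "t mod TT \<noteq> 0" "bel x (t div TT + 1) = Some y0"
    "v0 \<in> set (fw x y0 (t div TT + 1) (t mod TT - 1))" "c = cf x y0 (t div TT + 1) (t mod TT - 1) v0"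
    by auto
  have cf: "valid N x y0 (t div TT + 1) (t mod TT - 1) c" "cval c = v0"
    using cf_facts[OF h(3)] h(4) by auto
  obtain ss0 where ss0: "cinfo c = Some (ss0, y0, t div TT + 1, v0)" "length ss0 = t mod TT - 1"
    using valid_cinfo[OF cf(1)] cf(2) by auto
  have eqs: "ss = ss0" "y = y0" "r = t div TT + 1" "v = v0" using ss0(1) ci by auto
  have "v0 \<in> set (vals N TT (rc x) x y0 (t div TT + 1) (t mod TT - 1))" using fw_vals[OF h(3)] .
  then have "v0 \<in> A x y0 (t div TT + 1) (Suc (t mod TT - 1))" by (simp add: A_Suc)
  moreover have "Suc (t mod TT - 1) = t mod TT" using h(1) by simp
  ultimately show ?thesis using eqs h(1,2) ss0(2) by simp
qed

lemma appear_chain: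
  assumes t: "t < K * TT" and k: "k \<in> {1..N}" and m: "m \<in> set (tr t k q)" and xH: "x \<in> H"
    and sub: "MSig x c \<in> subterms m" and ci: "cinfo c = Some (ss, y, r, v)"
  shows "bel x r = Some y \<and> v \<in> A x y r (Suc (length ss)) \<and> (r - 1) * TT + Suc (length ss) \<le> t
     \<and> Suc (length ss) < TT \<and> 1 \<le> r"
proof -
  obtain t' j where t': "t' \<le> t" "MSig x c \<in> set (tr t' x j)"
    using unforge[OF t k m xH sub] by blast
  have t'K: "t' < K * TT" using t' t by simp
  note tc = top_chain[OF xH t'K t'(2) ci]
  have "t' div TT * TT + t' mod TT = t'" by (rule div_mult_mod_eq)
  moreover have "t' mod TT < TT" by simp
  ultimately show ?thesis using tc t' by auto
qed

lemma appear_sigma: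
  assumes t: "t < K * TT" and k: "k \<in> {1..N}" and m: "m \<in> set (tr t k q)" and xH: "x \<in> H"
    and sub: "sigma x r v \<in> subterms m"
  shows "mk r = Some x \<and> v = I r"
proof -
  have sub': "MSig x (MPair (MNum r) (MNum v)) \<in> subterms m" using sub by (simp add: sigma_def)
  obtain t' j where t': "t' \<le> t" "MSig x (MPair (MNum r) (MNum v)) \<in> set (tr t' x j)"
    using unforge[OF t k m xH sub'] by blast
  then have t'': "sigma x r v \<in> set (tr t' x j)" by (simp add: sigma_def)
  have t'K: "t' < K * TT" using t' t by simp
  show ?thesis using struct[OF xH t'K t'']
  proof
    assume "t' mod TT = 0 \<and> mk (t' div TT + 1) = Some x \<and> sigma x r v = sigma x (t' div TT + 1) (I (t' div TT + 1))"
    then show ?thesis by (auto simp: sigma_def)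
  next
    assume "t' mod TT \<noteq> 0 \<and> (\<exists>x0 v0. bel x (t' div TT + 1) = Some x0 \<and> v0 \<in> set (fw x x0 (t' div TT + 1) (t' mod TT - 1))
          \<and> sigma x r v = MSig x (cf x x0 (t' div TT + 1) (t' mod TT - 1) v0))"
    then obtain y0 v0 where h: "v0 \<in> set (fw x y0 (t' div TT + 1) (t' mod TT - 1))"
      "sigma x r v = MSig x (cf x y0 (t' div TT + 1) (t' mod TT - 1) v0)" by auto
    have "valid N x y0 (t' div TT + 1) (t' mod TT - 1) (cf x y0 (t' div TT + 1) (t' mod TT - 1) v0)"
      using cf_facts[OF h(1)] by auto
    then show ?thesis using sigma_neq_chain h(2) by metis
  qed
qed

lemma two_elems: "finite S \<Longrightarrow> 2 \<le> card S \<longleftrightarrow> (\<exists>u w. u \<in> S \<and> w \<in> S \<and> u \<noteq> w)"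
proof
  assume "finite S" "2 \<le> card S"
  then obtain u where u: "u \<in> S" by fastforce
  have "card (S - {u}) \<ge> 1" using \<open>2 \<le> card S\<close> \<open>finite S\<close> u by (simp add: card_Diff_singleton)
  then have "S - {u} \<noteq> {}" by (metis card.empty not_one_le_zero)
  then obtain w where "w \<in> S - {u}" by blast
  then show "\<exists>u w. u \<in> S \<and> w \<in> S \<and> u \<noteq> w" using u by blast
next
  assume "finite S" "\<exists>u w. u \<in> S \<and> w \<in> S \<and> u \<noteq> w"
  then obtain u w where "u \<in> S" "w \<in> S" "u \<noteq> w" by blast
  then have "{u, w} \<subseteq> S" by blast
  then have "card {u, w} \<le> card S" using \<open>finite S\<close> by (rule card_mono[rotated])
  then show "2 \<le> card S" using \<open>u \<noteq> w\<close> by simp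
qed

lemma two_transfer:
  assumes "finite U" "finite S" "2 \<le> card U" "\<forall>u\<in>U. u \<in> S \<or> 2 \<le> card S"
  shows "2 \<le> card S"
proof -
  obtain u w where "u \<in> U" "w \<in> U" "u \<noteq> w" using two_elems[OF assms(1)] assms(3) by blast
  then show ?thesis using assms(4) two_elems[OF assms(2)] by blast
qed

lemma H_nonempty_comm: "\<exists>c. c \<in> H \<and> comm f c"
proof (rule ccontr)
  assume "\<not> ?thesis"
  then have "{1..Suc f} \<subseteq> C" using fN by (auto simp: comm_def)
  moreover have "finite C" using CN finite_subset by blast
  ultimately have "card {1..Suc f} \<le> card C" by (rule card_mono[rotated])
  then show False using cardC by simp
qed

end

locale rnd = ctx +
  fixes r x :: nat
  assumes r1: "1 \<le> r" and rK: "r \<le> K" and belx: "\<forall>p\<in>H. bel p r = Some x"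
begin

definition FW :: "nat \<Rightarrow> nat \<Rightarrow> nat set" where
  "FW p j = fwS (vals N TT (rc p) p x r) j"

lemma time_ok: "j < TT \<Longrightarrow> (r - 1) * TT + j < K * TT"
proof -
  assume "j < TT"
  then have "(r - 1) * TT + j < (r - 1) * TT + TT" by simp
  also have "\<dots> = r * TT" using r1 by (cases r) auto
  also have "\<dots> \<le> K * TT" using rK by simp
  finally show ?thesis .
qed

lemma time_div: "j < TT \<Longrightarrow> ((r - 1) * TT + j) div TT + 1 = r \<and> ((r - 1) * TT + j) mod TT = j"
  using r1 by simp

lemma vals_time:
  assumes "v \<in> set (vals N TT (rc p) p x r j)"
  shows "\<exists>c k. k \<in> {1..N} \<and> c \<in> set (tr ((r - 1) * TT + j) k p) \<and> valid N p x r j c \<and> cval c = v"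
  using assms unfolding vals_mem rlist_mem by blast

lemma deliver:
  assumes pH: "p \<in> H" and qH: "q \<in> H" and cm: "comm f p \<or> comm f q" and j: "Suc j < TT"
    and v: "v \<in> set (fw p x r j)"
  shows "v \<in> A q x r (Suc (Suc j))"
proof -
  let ?t = "(r - 1) * TT + Suc j"
  have tK: "?t < K * TT" using time_ok[OF j] .
  have td: "?t div TT + 1 = r" "?t mod TT = Suc j" using time_div[OF j] by auto
  have "tr ?t p q = map (\<lambda>v. MSig p (cf p x r j v)) (fw p x r j)"
    using send_expl[OF pH tK, of q] td belx pH cm by (simp add: Let_def)
  then have inm: "MSig p (cf p x r j v) \<in> set (tr ?t p q)" using v by simp
  let ?c = "cf p x r j v"
  have cf: "?c \<in> set (rlist N (rc p) ((r - 1) * TT + j))" "valid N p x r j ?c" "cval ?c = v"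
    using cf_facts[OF v] by auto
  obtain ss where ss: "cinfo ?c = Some (ss, x, r, v)" "length ss = j" "distinct ss" "set ss \<subseteq> {1..N}" "p \<notin> set ss"
    using valid_cinfo[OF cf(2)] cf(3) by auto
  obtain k where k: "k \<in> {1..N}" "?c \<in> set (tr ((r - 1) * TT + j) k p)" using cf(1) rlist_mem by blast
  have ci2: "cinfo (MSig p ?c) = Some (p # ss, x, r, v)" using cinfo_MSig_chain[OF ss(1)] .
  show ?thesis
  proof (cases "q \<in> set (p # ss)")
    case True
    show ?thesis
    proof (cases "q = p")
      case True
      have "v \<in> set (vals N TT (rc p) p x r j)" using fw_vals[OF v] .
      then have "v \<in> A p x r (Suc j)" by (simp add: A_Suc)
      then show ?thesis using True A_mono[of "Suc j" "Suc (Suc j)" p x r] by auto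
    next
      case False
      then have "q \<in> set ss" using \<open>q \<in> set (p # ss)\<close> by simp
      then obtain a b where ab: "ss = a @ q # b" by (meson split_list)
      obtain c' where c': "MSig q c' \<in> subterms ?c" "cinfo c' = Some (b, x, r, v)"
        using cinfo_pos[of ?c a q b x r v] ss(1) ab by auto
      have "(r - 1) * TT + j < K * TT" using time_ok j by simp
      then have "v \<in> A q x r (Suc (length b))"
        using appear_chain[OF _ k(1) k(2) qH c'(1) c'(2)] by blast
      moreover have "Suc (length b) \<le> Suc (Suc j)" using ab ss(2) by simp
      ultimately show ?thesis using A_mono by blast
    qed
  next
    case False
    have pN: "p \<in> {1..N}" using pH by simp
    have "valid N q x r (Suc j) (MSig p ?c)"
      unfolding valid_def using ci2 ss False pN by auto
    moreover have "cval (MSig p ?c) = v" using ci2 by (simp add: cval_def)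
    moreover have "MSig p ?c \<in> set (rlist N (rc q) ((r - 1) * TT + Suc j))"
      using inm pN rlist_mem by blast
    ultimately have "v \<in> set (vals N TT (rc q) q x r (Suc j))" using vals_mem by blast
    then show ?thesis by (simp add: A_Suc)
  qed
qed

lemma deliver_set:
  assumes pH: "p \<in> H" and qH: "q \<in> H" and cm: "comm f p \<or> comm f q" and j: "j < TT"
  shows "FW p j \<subseteq> A q x r (Suc j)"
proof
  fix w assume "w \<in> FW p j"
  then obtain i where i: "i < j" "w \<in> set (fw p x r i)" unfolding FW_def fwS_def fw_def by blast
  have "w \<in> A q x r (Suc (Suc i))" by (rule deliver[OF pH qH cm _ i(2)]) (use i j in simp)
  moreover have "Suc (Suc i) \<le> Suc j" using i by simp
  ultimately show "w \<in> A q x r (Suc j)" using A_mono by blast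
qed

lemma FW_finite: "finite (FW p j)"
  unfolding FW_def fwS_def by auto

lemma cover: "v \<in> A p x r j \<Longrightarrow> v \<in> FW p j \<or> 2 \<le> card (FW p j)"
  unfolding FW_def A_def by (rule fwd_cover)

lemma spread_comm:
  assumes pH: "p \<in> H" and cp: "comm f p" and v: "v \<in> A p x r j" and j: "j < TT" and qH: "q \<in> H"
  shows "v \<in> A q x r (Suc j) \<or> 2 \<le> card (A q x r (Suc j))"
proof -
  have sub: "FW p j \<subseteq> A q x r (Suc j)" using deliver_set[OF pH qH _ j] cp by blast
  show ?thesis using cover[OF v]
  proof
    assume "v \<in> FW p j" then show ?thesis using sub by blast
  next
    assume "2 \<le> card (FW p j)"
    then show ?thesis using sub card_mono[OF A_finite sub] by simp
  qed
qed

lemma spread: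
  assumes pH: "p \<in> H" and v: "v \<in> A p x r j" and j: "Suc j < TT" and qH: "q \<in> H"
  shows "v \<in> A q x r (Suc (Suc j)) \<or> 2 \<le> card (A q x r (Suc (Suc j)))"
proof -
  obtain c0 where c0: "c0 \<in> H" "comm f c0" using H_nonempty_comm by blast
  have sub: "FW p j \<subseteq> A c0 x r (Suc j)" using deliver_set[OF pH c0(1) _] c0(2) j by simp
  have step: "\<forall>u\<in>A c0 x r (Suc j). u \<in> A q x r (Suc (Suc j)) \<or> 2 \<le> card (A q x r (Suc (Suc j)))"
    using spread_comm[OF c0(1) c0(2) _ j qH] by blast
  show ?thesis using cover[OF v]
  proof
    assume "v \<in> FW p j" then show ?thesis using sub step by blast
  next
    assume "2 \<le> card (FW p j)"
    then have "2 \<le> card (A c0 x r (Suc j))" using card_mono[OF A_finite sub] by simp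
    then have "2 \<le> card (A q x r (Suc (Suc j)))"
      using two_transfer[OF A_finite A_finite _ step] by blast
    then show ?thesis by simp
  qed
qed

definition Good :: "nat \<Rightarrow> nat \<Rightarrow> bool" where
  "Good q v \<longleftrightarrow> v \<in> A q x r TT \<or> 2 \<le> card (A q x r TT)"

lemma spread_end:
  assumes pH: "p \<in> H" and v: "v \<in> A p x r j" and j: "Suc (Suc j) \<le> TT" and qH: "q \<in> H"
  shows "Good q v"
proof -
  have "Suc j < TT" using j by simp
  note sp = spread[OF pH v this qH]
  have m: "A q x r (Suc (Suc j)) \<subseteq> A q x r TT" using A_mono j by blast
  show ?thesis using sp
  proof
    assume "v \<in> A q x r (Suc (Suc j))" then show ?thesis using m Good_def by blast
  next
    assume "2 \<le> card (A q x r (Suc (Suc j)))"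
    then show ?thesis using card_mono[OF A_finite m] Good_def by simp
  qed
qed

lemma R2:
  assumes pH: "p \<in> H" and v: "v \<in> A p x r TT" and qH: "q \<in> H"
  shows "Good q v"
proof -
  obtain i where i: "i < TT" "v \<in> set (vals N TT (rc p) p x r i)" using v A_iff by blast
  show ?thesis
  proof (cases "i + 3 \<le> TT")
    case True
    have "v \<in> A p x r (Suc i)" using i(2) by (simp add: A_Suc)
    then show ?thesis using spread_end[OF pH _ _ qH] True by simp
  next
    case False
    then have iL: "Suc f \<le> i" by simp
    obtain c k where ck: "k \<in> {1..N}" "c \<in> set (tr ((r - 1) * TT + i) k p)" "valid N p x r i c" "cval c = v"
      using vals_time[OF i(2)] by blast
    obtain ss where ss: "cinfo c = Some (ss, x, r, v)" "length ss = i" "distinct ss" "set ss \<subseteq> {1..N}"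
      using valid_cinfo[OF ck(3)] ck(4) by auto
    let ?d = "i - Suc f"
    let ?s1 = "take ?d ss" and ?s2 = "drop ?d ss"
    have len2: "length ?s2 = Suc f" using ss(2) iL by simp
    have d2: "distinct ?s2" using ss(3) by simp
    have "\<not> set ?s2 \<subseteq> C"
    proof
      assume "set ?s2 \<subseteq> C"
      moreover have "finite C" using CN finite_subset by blast
      ultimately have "card (set ?s2) \<le> card C" by (rule card_mono[rotated])
      then show False using distinct_card[OF d2] len2 cardC by simp
    qed
    then obtain s where s: "s \<in> set ?s2" "s \<notin> C" by blast
    have sH: "s \<in> H" using s ss(4) set_drop_subset[of ?d ss] by auto
    obtain a b where ab: "?s2 = a @ s # b" using s(1) by (meson split_list)
    have "ss = (?s1 @ a) @ s # b" using ab by (metis append.assoc append_take_drop_id)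
    then obtain c' where c': "MSig s c' \<in> subterms c" "cinfo c' = Some (b, x, r, v)"
      using cinfo_pos[of c "?s1 @ a" s b x r v] ss(1) by auto
    have lb: "length b \<le> f" using ab len2 by simp
    have "(r - 1) * TT + i < K * TT" using time_ok i(1) by simp
    then have vs: "v \<in> A s x r (Suc (length b))"
      using appear_chain[OF _ ck(1) ck(2) sH c'(1) c'(2)] by blast
    show ?thesis by (rule spread_end[OF sH vs _ qH]) (use lb in simp)
  qed
qed

lemma R3:
  assumes pH: "p \<in> H" and qH: "q \<in> H" and Ap: "A p x r TT = {v}"
  shows "A q x r TT = {v}"
proof -
  have G: "\<And>w. w \<in> A q x r TT \<Longrightarrow> w = v"
  proof -
    fix w assume "w \<in> A q x r TT"
    then have "Good p w" using R2[OF qH _ pH] by blast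
    then show "w = v" using Ap unfolding Good_def by auto
  qed
  have "Good q v" using R2[OF pH _ qH] Ap by blast
  then have "v \<in> A q x r TT"
  proof (unfold Good_def, elim disjE)
    assume "2 \<le> card (A q x r TT)"
    then obtain u w where "u \<in> A q x r TT" "w \<in> A q x r TT" "u \<noteq> w"
      using two_elems[OF A_finite] by blast
    then show ?thesis using G by blast
  qed
  then show ?thesis using G by blast
qed

lemma vals_sigma:
  assumes qH: "q \<in> H" and w: "w \<in> A q x r TT" and xH: "x \<in> H"
  shows "mk r = Some x \<and> w = I r"
proof -
  obtain i where i: "i < TT" "w \<in> set (vals N TT (rc q) q x r i)" using w A_iff by blast
  obtain c k where ck: "k \<in> {1..N}" "c \<in> set (tr ((r - 1) * TT + i) k q)" "valid N q x r i c" "cval c = w"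
    using vals_time[OF i(2)] by blast
  obtain ss where ss: "cinfo c = Some (ss, x, r, w)"
    using valid_cinfo[OF ck(3)] ck(4) by auto
  have "sigma x r w \<in> subterms c" by (rule cinfo_sigma_sub[OF ss])
  moreover have "(r - 1) * TT + i < K * TT" using time_ok i(1) by simp
  ultimately show ?thesis using appear_sigma[OF _ ck(1) ck(2) xH] by blast
qed

lemma R4:
  assumes xH: "x \<in> H" and mkx: "mk r = Some x" and qH: "q \<in> H"
  shows "A q x r TT = {I r}"
proof -
  have sub: "\<And>p w. p \<in> H \<Longrightarrow> w \<in> A p x r TT \<Longrightarrow> w = I r" using vals_sigma xH by blast
  obtain c0 where c0: "c0 \<in> H" "comm f c0" using H_nonempty_comm by blast
  let ?t = "(r - 1) * TT"
  have tK: "?t < K * TT" using time_ok[of 0] by simp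
  have td: "?t div TT + 1 = r" "?t mod TT = 0" using time_div[of 0] by auto
  have "tr ?t x c0 = [sigma x r (I r)]"
    using send_expl[OF xH tK, of c0] td mkx c0(2) by (simp add: Let_def)
  moreover have "valid N c0 x r 0 (sigma x r (I r))" by (simp add: valid_def)
  moreover have "cval (sigma x r (I r)) = I r" by (simp add: cval_def)
  moreover have "x \<in> {1..N}" using xH by simp
  ultimately have "sigma x r (I r) \<in> set (rlist N (rc c0) ((r - 1) * TT + 0))"
      "valid N c0 x r 0 (sigma x r (I r))" "cval (sigma x r (I r)) = I r"
    unfolding rlist_mem by (auto intro!: bexI[of _ x])
  then have "I r \<in> set (vals N TT (rc c0) c0 x r 0)" using vals_mem by blast
  then have "I r \<in> A c0 x r 1" by (simp add: A_Suc)
  then have "Good q (I r)" using spread_end[OF c0(1) _ _ qH] by simp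
  then have "I r \<in> A q x r TT"
  proof (unfold Good_def, elim disjE)
    assume "2 \<le> card (A q x r TT)"
    then obtain u w where "u \<in> A q x r TT" "w \<in> A q x r TT" "u \<noteq> w"
      using two_elems[OF A_finite] by blast
    then show ?thesis using sub[OF qH] by blast
  qed
  then show ?thesis using sub[OF qH] by blast
qed

lemma R5:
  assumes xH: "x \<in> H" and mkx: "mk r \<noteq> Some x" and qH: "q \<in> H"
  shows "A q x r TT = {}"
  using vals_sigma[OF qH _ xH] mkx by blast

end


context ctx begin

abbreviation "dec p r \<equiv> dec_of N TT (sendF N f, decF N f) I tr mk p r"

lemma bel1: "bel p 1 = Some 1" by (simp add: bel_def)

lemma bel_Suc: "1 \<le> r \<Longrightarrow> bel p (Suc r) = (case bel p r of None \<Rightarrow> None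
   | Some x \<Rightarrow> if card (A p x r TT) = 1 then Some (the_elem (A p x r TT)) else None)"
proof -
  assume "1 \<le> r"
  then obtain r' where r': "r = Suc r'" by (cases r) auto
  show ?thesis unfolding r' bel_def A_def by simp
qed

lemma H_ne: "\<exists>p. p \<in> H"
  using H_nonempty_comm by blast

lemma finite_H: "finite H" by simp

definition Inv :: "nat \<Rightarrow> bool" where
  "Inv r \<longleftrightarrow> (\<exists>\<beta>. (\<forall>p\<in>H. bel p r = \<beta>) \<and> (\<forall>m. mk r = Some m \<longrightarrow> m \<in> H \<and> \<beta> = Some m))"

lemma Inv1: "Inv 1"
proof -
  have "1 \<in> {1..N}" using fN by simp
  then show ?thesis unfolding Inv_def using bel1 ex_mk1 by (intro exI[of _ "Some 1"]) auto
qed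

lemma mk_Suc_cases:
  assumes "1 \<le> r"
  shows "mk (Suc r) = None \<or> (\<exists>m. mk (Suc r) = Some m \<and> m \<in> H \<and> is_marked (dec m r))"
proof (cases "\<exists>!i. i \<in> H \<and> is_marked (dec i r)")
  case True
  then have "(THE i. i \<in> H \<and> is_marked (dec i r)) \<in> H \<and> is_marked (dec (THE i. i \<in> H \<and> is_marked (dec i r)) r)"
    by (rule theI')
  then show ?thesis using ex_mkS[OF assms] True by simp
next
  case False
  then show ?thesis using ex_mkS[OF assms] by simp
qed

lemma step:
  assumes r1: "1 \<le> r" and rK: "r \<le> K" and inv: "Inv r"
  shows "Inv (Suc r) \<and> round_ok N TT (sendF N f, decF N f) C I tr mk r"
proof -
  obtain \<beta> where b: "\<forall>p\<in>H. bel p r = \<beta>" "\<forall>m. mk r = Some m \<longrightarrow> m \<in> H \<and> \<beta> = Some m"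
    using inv Inv_def by blast
  show ?thesis
  proof (cases \<beta>)
    case None
    have du: "\<And>p. p \<in> H \<Longrightarrow> dec p r = Unmarked" using dec_expl[OF r1] b(1) None by simp
    have mkr: "mk r = None" using b(2) None by (cases "mk r") auto
    have ms: "{i \<in> H. is_marked (dec i r)} = {}" using du by (auto simp: is_marked_def)
    have rok: "round_ok N TT (sendF N f, decF N f) C I tr mk r"
    proof -
      have "\<forall>i d. mk r = None \<and> i \<in> H \<and> dec i r = Marked d \<longrightarrow> d \<notin> Some ` H"
        using du by fastforce
      then show ?thesis unfolding round_ok_def ms using mkr by simp
    qed
    have "mk (Suc r) = None" using mk_Suc_cases[OF r1] du by (auto simp: is_marked_def)
    moreover have "\<forall>p\<in>H. bel p (Suc r) = None" using bel_Suc[OF r1] b(1) None by simp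
    ultimately have "Inv (Suc r)" unfolding Inv_def by auto
    then show ?thesis using rok by simp
  next
    case (Some x)
    have "rnd N f K C I tr mk r x"
      by (intro rnd.intro ctx_axioms rnd_axioms.intro r1 rK) (use b(1) Some in simp)
    then interpret R: rnd N f K C I tr mk r x .
    have dx: "\<And>p. p \<in> H \<Longrightarrow> dec p r = (if A p x r TT = {p} then Marked (Some x) else Unmarked)"
      using dec_expl[OF r1] b(1) Some by simp
    have ms: "{i \<in> H. is_marked (dec i r)} = {i \<in> H. A i x r TT = {i}}"
      using dx by (auto simp: is_marked_def split: if_splits)
    have cons: "card {i \<in> H. A i x r TT = {i}} \<le> 1"
    proof -
      have fin: "finite {i \<in> H. A i x r TT = {i}}" by simp
      have "\<forall>a\<in>{i \<in> H. A i x r TT = {i}}. \<forall>b\<in>{i \<in> H. A i x r TT = {i}}. a = b"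
        using R.R3 by blast
      then show ?thesis using card_le_Suc0_iff_eq[OF fin] by simp
    qed
    have live: "\<forall>m n. mk r = Some m \<and> m \<in> H \<and> I r = n \<and> n \<in> H \<longrightarrow> dec n r = Marked (Some m)"
    proof (intro allI impI)
      fix m n assume h: "mk r = Some m \<and> m \<in> H \<and> I r = n \<and> n \<in> H"
      then have "x = m" using b(2) Some by auto
      then have "A n x r TT = {n}" using R.R4[of n] h by simp
      then show "dec n r = Marked (Some m)" using dx h \<open>x = m\<close> by simp
    qed
    have nimp: "\<forall>i d. mk r = None \<and> i \<in> H \<and> dec i r = Marked d \<longrightarrow> d \<notin> Some ` H"
    proof (intro allI impI)
      fix i d assume h: "mk r = None \<and> i \<in> H \<and> dec i r = Marked d"
      then have Ai: "A i x r TT = {i}" and d: "d = Some x"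
        using dx[of i] by (auto split: if_splits)
      have "x \<notin> H"
      proof
        assume "x \<in> H"
        then have "A i x r TT = {}" using R.R5[of i] h by simp
        then show False using Ai by simp
      qed
      then show "d \<notin> Some ` H" using d by auto
    qed
    have rok: "round_ok N TT (sendF N f, decF N f) C I tr mk r"
      unfolding round_ok_def using ms cons live nimp by simp
    obtain p0 where p0: "p0 \<in> H" using H_ne by blast
    have bs: "\<And>p. p \<in> H \<Longrightarrow> bel p (Suc r) = (if card (A p x r TT) = 1 then Some (the_elem (A p x r TT)) else None)"
      using bel_Suc[OF r1] b(1) Some by simp
    have eqb: "\<And>p. p \<in> H \<Longrightarrow> bel p (Suc r) = bel p0 (Suc r)"
    proof -
      fix p assume pH: "p \<in> H"
      show "bel p (Suc r) = bel p0 (Suc r)"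
      proof (cases "card (A p x r TT) = 1")
        case True
        then obtain v where v: "A p x r TT = {v}" using card_1_singletonE by blast
        then have "A p0 x r TT = {v}" using R.R3[OF pH p0] by simp
        then show ?thesis using bs[OF pH] bs[OF p0] v by simp
      next
        case False
        have "card (A p0 x r TT) \<noteq> 1"
        proof
          assume "card (A p0 x r TT) = 1"
          then obtain v where "A p0 x r TT = {v}" using card_1_singletonE by blast
          then have "A p x r TT = {v}" using R.R3[OF p0 pH] by simp
          then show False using False by simp
        qed
        then show ?thesis using bs[OF pH] bs[OF p0] False by simp
      qed
    qed
    have "\<forall>m. mk (Suc r) = Some m \<longrightarrow> m \<in> H \<and> bel p0 (Suc r) = Some m"
    proof (intro allI impI)
      fix m assume mm: "mk (Suc r) = Some m"
      then obtain m' where m': "mk (Suc r) = Some m'" "m' \<in> H" "is_marked (dec m' r)"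
        using mk_Suc_cases[OF r1] by auto
      then have "m = m'" using mm by simp
      have "A m x r TT = {m}" using m' dx[of m'] \<open>m = m'\<close> by (auto simp: is_marked_def split: if_splits)
      then have "bel m (Suc r) = Some m" using bs[of m] m'(2) \<open>m = m'\<close> by simp
      then show "m \<in> H \<and> bel p0 (Suc r) = Some m" using eqb[of m] m'(2) \<open>m = m'\<close> by simp
    qed
    then have "Inv (Suc r)" unfolding Inv_def using eqb by blast
    then show ?thesis using rok by simp
  qed
qed

lemma Inv_all: "1 \<le> r \<Longrightarrow> r \<le> K \<Longrightarrow> Inv r"
proof (induction r)
  case 0 then show ?case by simp
next
  case (Suc r)
  show ?case
  proof (cases "r = 0")
    case True then show ?thesis using Inv1 by simp
  next
    case False
    then have "Inv r" using Suc by simp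
    then show ?thesis using step[of r] False Suc.prems by simp
  qed
qed

lemma round_ok_all: "r \<in> {1..K} \<Longrightarrow> round_ok N TT (sendF N f, decF N f) C I tr mk r"
  using step Inv_all by auto

end


lemma sum_list_le_len: "(\<forall>m\<in>set l. g m \<le> c) \<Longrightarrow> sum_list (map g l) \<le> c * length l"
  by (induction l) auto

lemma count_if: "finite S \<Longrightarrow> (\<Sum>j\<in>S. if P j then c else 0) = c * card {j \<in> S. P j}"
proof -
  assume "finite S"
  then have "(\<Sum>j\<in>{j \<in> S. P j}. c) = (\<Sum>j\<in>S. if P j then c else 0)"
    by (rule sum.inter_filter)
  then show ?thesis by (simp add: mult.commute)
qed

context ctx begin

lemma comm_card: "card {j \<in> {1..N}. comm f j} = Suc f"
proof -
  have "{j \<in> {1..N}. comm f j} = {1..Suc f}" using fN by (auto simp: comm_def)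
  then show ?thesis by simp
qed

lemma nsig_bound:
  assumes pH: "p \<in> H" and t: "t < K * TT" and m: "m \<in> set (tr t p j)"
  shows "nsigs m \<le> TT"
  using struct[OF pH t m]
proof
  assume "t mod TT = 0 \<and> mk (t div TT + 1) = Some p \<and> m = sigma p (t div TT + 1) (I (t div TT + 1))"
  then show ?thesis by (simp add: sigma_def)
next
  assume "t mod TT \<noteq> 0 \<and> (\<exists>x v. bel p (t div TT + 1) = Some x \<and> v \<in> set (fw p x (t div TT + 1) (t mod TT - 1))
          \<and> m = MSig p (cf p x (t div TT + 1) (t mod TT - 1) v))"
  then obtain x v where h: "t mod TT \<noteq> 0" "v \<in> set (fw p x (t div TT + 1) (t mod TT - 1))"
     "m = MSig p (cf p x (t div TT + 1) (t mod TT - 1) v)" by blast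
  have "valid N p x (t div TT + 1) (t mod TT - 1) (cf p x (t div TT + 1) (t mod TT - 1) v)"
    using cf_facts[OF h(2)] by blast
  then obtain ss where "cinfo (cf p x (t div TT + 1) (t mod TT - 1) v) = Some (ss, x, t div TT + 1, cval (cf p x (t div TT + 1) (t mod TT - 1) v))"
    "length ss = t mod TT - 1" using valid_cinfo by blast
  then have "nsigs m = Suc (Suc (t mod TT - 1))" using cinfo_nsigs h(3) by simp
  moreover have "t mod TT < TT" by simp
  ultimately show ?thesis using h(1) by linarith
qed

lemma tdiv: "j < TT \<Longrightarrow> 1 \<le> r \<Longrightarrow> ((r - 1) * TT + j) div TT + 1 = r \<and> ((r - 1) * TT + j) mod TT = j"
  by simp

definition L :: "nat \<Rightarrow> nat \<Rightarrow> nat \<Rightarrow> nat" where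
  "L p r i = (case bel p r of None \<Rightarrow> 0 | Some x \<Rightarrow> length (fw p x r i))"

lemma L_total: "(\<Sum>i<n. L p r i) \<le> 2"
proof (cases "bel p r")
  case None then show ?thesis by (simp add: L_def)
next
  case (Some x)
  then show ?thesis unfolding L_def fw_def using fwd_total by simp
qed

definition Rp :: "nat \<Rightarrow> nat" where "Rp p = (if comm f p then N else Suc f)"

lemma step0_bound:
  assumes pH: "p \<in> H" and r1: "1 \<le> r" and rK: "r \<le> K"
  shows "(\<Sum>j\<in>{1..N}. length (tr ((r - 1) * TT) p j)) \<le> Suc f"
proof -
  let ?t = "(r - 1) * TT"
  have tK: "?t < K * TT"
  proof -
    have "?t < r * TT" using r1 by (cases r) auto
    also have "\<dots> \<le> K * TT" using rK by simp
    finally show ?thesis .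
  qed
  have "\<And>j. length (tr ?t p j) \<le> (if comm f j then 1 else 0)"
    using send_expl[OF pH tK] by (simp add: Let_def)
  then have "(\<Sum>j\<in>{1..N}. length (tr ?t p j)) \<le> (\<Sum>j\<in>{1..N}. if comm f j then 1 else 0)"
    by (rule sum_mono)
  also have "\<dots> = Suc f" using count_if[of "{1..N}" "comm f" 1] comm_card by simp
  finally show ?thesis .
qed

lemma stepk_bound:
  assumes pH: "p \<in> H" and r1: "1 \<le> r" and rK: "r \<le> K" and i: "Suc i < TT"
  shows "(\<Sum>j\<in>{1..N}. length (tr ((r - 1) * TT + Suc i) p j)) \<le> Rp p * L p r i"
proof -
  let ?t = "(r - 1) * TT + Suc i"
  have tK: "?t < K * TT"
  proof -
    have "?t < (r - 1) * TT + TT" using i by simp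
    also have "\<dots> = r * TT" using r1 by (cases r) auto
    also have "\<dots> \<le> K * TT" using rK by simp
    finally show ?thesis .
  qed
  have td: "?t div TT + 1 = r" "?t mod TT = Suc i" using tdiv[OF i r1] by auto
  have "\<And>j. length (tr ?t p j) \<le> (if comm f p \<or> comm f j then L p r i else 0)"
    using send_expl[OF pH tK] td by (simp add: Let_def L_def split: option.splits)
  then have "(\<Sum>j\<in>{1..N}. length (tr ?t p j)) \<le> (\<Sum>j\<in>{1..N}. if comm f p \<or> comm f j then L p r i else 0)"
    by (rule sum_mono)
  also have "\<dots> = L p r i * card {j \<in> {1..N}. comm f p \<or> comm f j}"
    by (rule count_if) simp
  also have "\<dots> = Rp p * L p r i"
  proof (cases "comm f p")
    case True
    then have "{j \<in> {1..N}. comm f p \<or> comm f j} = {1..N}" by auto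
    then show ?thesis using True by (simp add: Rp_def)
  next
    case False
    then show ?thesis using comm_card by (simp add: Rp_def)
  qed
  finally show ?thesis .
qed

lemma proc_bound:
  assumes pH: "p \<in> H" and r1: "1 \<le> r" and rK: "r \<le> K"
  shows "(\<Sum>t\<in>{(r - 1) * TT..<r * TT}. \<Sum>j\<in>{1..N}. length (tr t p j)) \<le> Suc f + 2 * Rp p"
proof -
  let ?G = "\<lambda>t. \<Sum>j\<in>{1..N}. length (tr t p j)"
  have rT: "r * TT = TT + (r - 1) * TT" using r1 by (cases r) auto
  have "(\<Sum>t\<in>{(r - 1) * TT..<r * TT}. ?G t) = (\<Sum>k\<in>{0..<TT}. ?G (k + (r - 1) * TT))"
    using sum.shift_bounds_nat_ivl[of ?G 0 "(r - 1) * TT" TT] rT by simp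
  also have "\<dots> = (\<Sum>k<Suc (Suc (Suc f)). ?G ((r - 1) * TT + k))"
  proof -
    have e: "{0..<TT} = {..<Suc (Suc (Suc f))}" by auto
    show ?thesis unfolding e by (rule sum.cong[OF refl]) (simp add: add.commute)
  qed
  also have "\<dots> = ?G ((r - 1) * TT) + (\<Sum>i<Suc (Suc f). ?G ((r - 1) * TT + Suc i))"
    by (subst sum.lessThan_Suc_shift) simp
  also have "\<dots> \<le> Suc f + (\<Sum>i<Suc (Suc f). Rp p * L p r i)"
  proof (rule add_mono)
    show "?G ((r - 1) * TT) \<le> Suc f" by (rule step0_bound[OF pH r1 rK])
    show "(\<Sum>i<Suc (Suc f). ?G ((r - 1) * TT + Suc i)) \<le> (\<Sum>i<Suc (Suc f). Rp p * L p r i)"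
      by (rule sum_mono) (rule stepk_bound[OF pH r1 rK], simp)
  qed
  also have "\<dots> = Suc f + Rp p * (\<Sum>i<Suc (Suc f). L p r i)"
    by (simp only: sum_distrib_left)
  also have "\<dots> \<le> Suc f + Rp p * 2"
    using mult_le_mono2[OF L_total[of p r "Suc (Suc f)"], of "Rp p"] by linarith
  finally show ?thesis by simp
qed

lemma honest_total:
  "(\<Sum>p\<in>H. Suc f + 2 * Rp p) \<le> 5 * N * Suc f"
proof -
  have "(\<Sum>p\<in>H. Suc f + 2 * Rp p) \<le> (\<Sum>p\<in>{1..N}. Suc f + 2 * Rp p)"
    by (rule sum_mono2) auto
  also have "\<dots> \<le> (\<Sum>p\<in>{1..N}. 3 * Suc f + 2 * (if comm f p then N else 0))"
    by (rule sum_mono) (auto simp: Rp_def)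
  also have "\<dots> = (\<Sum>p\<in>{1..N}. 3 * Suc f) + 2 * (\<Sum>p\<in>{1..N}. if comm f p then N else 0)"
    by (simp only: sum.distrib sum_distrib_left)
  also have "\<dots> = N * (3 * Suc f) + 2 * (N * Suc f)"
    using count_if[of "{1..N}" "comm f" N] comm_card by simp
  also have "\<dots> = 5 * N * Suc f" by (simp add: algebra_simps)
  finally show ?thesis .
qed

lemma msgs_bound: "r \<in> {1..K} \<Longrightarrow> msgs_in_round N TT C tr r \<le> 5 * N * Suc f"
proof -
  assume r: "r \<in> {1..K}"
  have "msgs_in_round N TT C tr r = (\<Sum>p\<in>H. \<Sum>t\<in>{(r - 1) * TT..<r * TT}. \<Sum>j\<in>{1..N}. length (tr t p j))"
    unfolding msgs_in_round_def
    by (rule sum.swap[of "\<lambda>t p. \<Sum>j\<in>{1..N}. length (tr t p j)" H "{(r - 1) * TT..<r * TT}"])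
  also have "\<dots> \<le> (\<Sum>p\<in>H. Suc f + 2 * Rp p)"
    by (rule sum_mono) (use proc_bound r in auto)
  also have "\<dots> \<le> 5 * N * Suc f" by (rule honest_total)
  finally show ?thesis .
qed

lemma sigs_bound: "r \<in> {1..K} \<Longrightarrow> sigs_in_round N TT C tr r \<le> TT * (5 * N * Suc f)"
proof -
  assume r: "r \<in> {1..K}"
  have pt: "sum_list (map nsigs (tr t i j)) \<le> TT * length (tr t i j)"
    if t: "t \<in> {(r - 1) * TT..<r * TT}" and i: "i \<in> H" for t i j
  proof -
    have "t < r * TT" using t by simp
    also have "\<dots> \<le> K * TT" using r by simp
    finally have tK: "t < K * TT" .
    have "\<forall>m\<in>set (tr t i j). nsigs m \<le> TT" using nsig_bound[OF i tK] by blast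
    then show ?thesis by (rule sum_list_le_len)
  qed
  have "sigs_in_round N TT C tr r \<le> (\<Sum>t\<in>{(r - 1) * TT..<r * TT}. \<Sum>i\<in>H. \<Sum>j\<in>{1..N}. TT * length (tr t i j))"
    unfolding sigs_in_round_def
    apply (rule sum_mono)
    apply (rule sum_mono)
    apply (rule sum_mono)
    apply (rule pt)
    apply assumption+
    done
  also have "\<dots> = TT * msgs_in_round N TT C tr r"
    unfolding msgs_in_round_def by (simp only: sum_distrib_left)
  also have "\<dots> \<le> TT * (5 * N * Suc f)" using msgs_bound[OF r] by simp
  finally show ?thesis .
qed

end

theorem mainTheorem3:
  shows "\<exists>c::nat. \<forall>N f K. f < N \<longrightarrow>
           (\<exists>T P. 1 \<le> T \<and> T \<le> c * (f + 1)
              \<and> marker_solution N f K T P (c * N * (f + 1)) (c * N * (f + 1)^2))"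
proof (rule exI[of _ 18], intro allI impI)
  fix N f K :: nat
  assume fN: "f < N"
  show "\<exists>T P. 1 \<le> T \<and> T \<le> 18 * (f + 1)
              \<and> marker_solution N f K T P (18 * N * (f + 1)) (18 * N * (f + 1)^2)"
  proof (intro exI[of _ "f + 3"] exI[of _ "(sendF N f, decF N f)"] conjI)
    show "1 \<le> f + 3" by simp
    show "f + 3 \<le> 18 * (f + 1)" by simp
    show "marker_solution N f K (f + 3) (sendF N f, decF N f) (18 * N * (f + 1)) (18 * N * (f + 1)^2)"
      unfolding marker_solution_def
    proof (intro allI impI)
      fix C I tr mk
      assume h: "C \<subseteq> {1..N} \<and> card C \<le> f \<and> (\<forall>r. I r \<in> {1..N}) \<and> execution N K (f + 3) (sendF N f, decF N f) C I tr mk"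
      then interpret X: ctx N f K C I tr mk
        by (intro ctx.intro) (use fN in auto)
      have m: "\<And>r. r \<in> {1..K} \<Longrightarrow> msgs_in_round N (f + 3) C tr r \<le> 18 * N * (f + 1)"
      proof -
        fix r assume "r \<in> {1..K}"
        then have "msgs_in_round N (f + 3) C tr r \<le> 5 * N * Suc f" by (rule X.msgs_bound)
        also have "\<dots> \<le> 18 * N * (f + 1)" by simp
        finally show "msgs_in_round N (f + 3) C tr r \<le> 18 * N * (f + 1)" .
      qed
      have s: "\<And>r. r \<in> {1..K} \<Longrightarrow> sigs_in_round N (f + 3) C tr r \<le> 18 * N * (f + 1)^2"
      proof -
        fix r assume "r \<in> {1..K}"
        then have "sigs_in_round N (f + 3) C tr r \<le> (f + 3) * (5 * N * Suc f)" by (rule X.sigs_bound)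
        also have "\<dots> \<le> (3 * (f + 1)) * (5 * N * Suc f)" by (intro mult_le_mono1) simp
        also have "\<dots> = 15 * N * (f + 1)^2" by (simp add: power2_eq_square algebra_simps)
        also have "\<dots> \<le> 18 * N * (f + 1)^2" by simp
        finally show "sigs_in_round N (f + 3) C tr r \<le> 18 * N * (f + 1)^2" .
      qed
      show "honest_sig_ok N K (f + 3) C tr \<and>
           (\<forall>r\<in>{1..K}. round_ok N (f + 3) (sendF N f, decF N f) C I tr mk r
              \<and> msgs_in_round N (f + 3) C tr r \<le> 18 * N * (f + 1)
              \<and> sigs_in_round N (f + 3) C tr r \<le> 18 * N * (f + 1)^2)"
        using X.honest_sig X.round_ok_all m s by blast
    qed
  qed
qed


end
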